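(* Let $$L(x,y)=D^2-\frac{2(y+1)}{xy+x+y}D+\frac{2(y+1)^2}{(xy+x+y)^2},\qquad D=\frac{d}{dx},$$ whose solution space in $x$ for fixed $y$ is spanned by $z_1=y+(y+1)x$ and $z_2=yx+(y+1)x^2$. Then: (i) for any two distinct values $y_1\neq y_2$, the right greatest common divisor of $L(x,y_1)$ and $L(x,y_2)$ (in the ring of LODOs with coefficients depending on $x$) has order exactly $1$; (ii) for suitable (generic) three values $y_1,y_2,y_3$ the right greatest common divisor of $L(x,y_1),L(x,y_2),L(x,y_3)$ has order $0$. Consequently the Euler integral $L(x,y)\varphi(x)$ is operator-irreducible, but there are no values $y_1,y_2$ and LODOs $P_1(x),P_2(x)$ with coefficients depending on $x$ only such that $P_1(x)L(x,y_1)+P_2(x)L(x,y_2)=1$.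
   Context: A LODO in $x$ is an operator $\sum_i a_i D^i$, $D=d/dx$; operators $R(x)$ have coefficients depending only on $x$. The right greatest common divisor of LODOs $A_1,\dots,A_r$ is a LODO $G$ of maximal order such that each $A_i=B_iG$ for some LODO $B_i$ (defined up to left multiplication by a nonzero function). A Euler integral $L(x,y)\varphi(x)$ ($\varphi$ an arbitrary smooth function of $x$) is operator-reducible if $L(x,y)=M(x,y)R(x)$ with $\operatorname{ord}M<\operatorname{ord}L$ and $R(x)$ having coefficients depending on $x$ only; otherwise operator-irreducible. *)

theory Defs
  imports "HOL-Computational_Algebra.Computational_Algebra"
          "HOL-Computational_Algebra.Normalized_Fraction"
          "HOL-Computational_Algebra.Field_as_Ring"
begin

text \<open>Coefficient field: real rational functions in x, i.e. the fraction field
  of real polynomials in x, with the derivation d/dx.\<close>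

type_synonym ratfun = "real poly fract"

definition rderiv :: "ratfun \<Rightarrow> ratfun" where
  "rderiv r = (case quot_of_fract r of (p, q) \<Rightarrow>
      Fract (pderiv p * q - p * pderiv q) (q * q))"

text \<open>A LODO  sum_i a_i D^i  with coefficients a_i in ratfun is represented
  by the polynomial (in the formal variable D) with coefficients a_i.
  Multiplication is the (noncommutative) composition, using D a = a D + a'.\<close>

type_synonym lodo = "ratfun poly"

definition lodo_ord :: "lodo \<Rightarrow> nat" where
  "lodo_ord A = degree A"

text \<open>Left multiplication by D:  D (sum b_j D^j) = sum (b_j D^(j+1) + b_j' D^j).\<close>
definition Dmul :: "lodo \<Rightarrow> lodo" where
  "Dmul B = pCons 0 B + map_poly rderiv B"

definition lodo_mult :: "lodo \<Rightarrow> lodo \<Rightarrow> lodo" where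
  "lodo_mult A B = (\<Sum>i\<le>degree A. smult (coeff A i) ((Dmul ^^ i) B))"

definition common_right_divisor :: "lodo \<Rightarrow> lodo list \<Rightarrow> bool" where
  "common_right_divisor G As \<longleftrightarrow> G \<noteq> 0 \<and> (\<forall>A\<in>set As. \<exists>B. A = lodo_mult B G)"

definition is_rgcd :: "lodo \<Rightarrow> lodo list \<Rightarrow> bool" where
  "is_rgcd G As \<longleftrightarrow> common_right_divisor G As \<and>
     (\<forall>H. common_right_divisor H As \<longrightarrow> lodo_ord H \<le> lodo_ord G)"

text \<open>The operator L(x,y) = D^2 - 2(y+1)/(xy+x+y) D + 2(y+1)^2/(xy+x+y)^2.
  Note xy+x+y = y + (y+1) x is never the zero polynomial.\<close>
definition Lden :: "real \<Rightarrow> real poly" where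
  "Lden y = [:y, y + 1:]"

definition Lop :: "real \<Rightarrow> lodo" where
  "Lop y = [: Fract [:2 * (y + 1)^2:] (Lden y * Lden y),
              Fract [:- 2 * (y + 1):] (Lden y),
              1 :]"

end

theory Submission
  imports Defs
begin
lemma rderiv_quot:
  assumes q: "q \<noteq> 0"
  shows "rderiv (to_fract p / to_fract q) = to_fract (pderiv p * q - p * pderiv q) / to_fract (q*q)"
proof -
  obtain p0 q0 where pq: "quot_of_fract (to_fract p / to_fract q) = (p0,q0)"
    by (cases "quot_of_fract (to_fract p / to_fract q)") auto
  have q0: "q0 \<noteq> 0" using snd_quot_of_fract_nonzero[of "to_fract p / to_fract q"] pq by simp
  have "Fract p0 q0 = to_fract p / to_fract q"
    using Fract_quot_of_fract[of "to_fract p / to_fract q"] pq by simp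
  hence "to_fract p0 / to_fract q0 = to_fract p / to_fract q" by (simp add: Fract_conv_to_fract)
  hence "to_fract p0 * to_fract q = to_fract p * to_fract q0" using q q0 by (simp add: field_simps)
  hence "to_fract (p0 * q) = to_fract (p * q0)" by simp
  hence e: "p0 * q = p * q0" by (rule to_fract_eq_iff[THEN iffD1])
  have d: "pderiv p0 * q + p0 * pderiv q = pderiv p * q0 + p * pderiv q0"
    using arg_cong[OF e, of pderiv] by (simp add: pderiv_mult algebra_simps)
  have "rderiv (to_fract p / to_fract q) = Fract (pderiv p0 * q0 - p0 * pderiv q0) (q0*q0)"
    by (simp add: rderiv_def pq)
  also have "\<dots> = Fract (pderiv p * q - p * pderiv q) (q*q)"
  proof (subst eq_fract(1))
    show "q0 * q0 \<noteq> 0" using q0 by simp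
    show "q * q \<noteq> 0" using q by simp
    show "(pderiv p0 * q0 - p0 * pderiv q0) * (q * q) = (pderiv p * q - p * pderiv q) * (q0 * q0)"
      using e d by algebra
  qed
  finally show ?thesis by (simp add: Fract_conv_to_fract)
qed

lemma rderiv_to_fract [simp]: "rderiv (to_fract p) = to_fract (pderiv p)"
  using rderiv_quot[of 1 p] by simp

lemma rderiv_0 [simp]: "rderiv 0 = 0"
  using rderiv_to_fract[of 0] by simp

lemma rderiv_1 [simp]: "rderiv 1 = 0"
  using rderiv_to_fract[of 1] by simp

lemma fract_rep: obtains p q where "q \<noteq> 0" "(a::ratfun) = to_fract p / to_fract q"
proof -
  obtain p q where "q \<noteq> 0" "a = Fract p q" by (cases a) auto
  thus ?thesis using that by (simp add: Fract_conv_to_fract)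
qed

lemma rderiv_add [simp]: "rderiv (a + b) = rderiv a + rderiv b"
proof -
  obtain p q where q: "q \<noteq> 0" and a: "a = to_fract p / to_fract q" by (rule fract_rep)
  obtain r s where s: "s \<noteq> 0" and b: "b = to_fract r / to_fract s" by (rule fract_rep)
  have "a + b = to_fract (p*s + r*q) / to_fract (q*s)" using q s a b by (simp add: field_simps)
  hence rab: "rderiv (a+b) = to_fract (pderiv (p*s + r*q) * (q*s) - (p*s + r*q) * pderiv (q*s)) / to_fract (q*s*(q*s))"
    by (simp only:) (rule rderiv_quot, simp add: q s)
  have ra: "rderiv a = to_fract (pderiv p * q - p * pderiv q) / to_fract (q*q)" using a q by (simp add: rderiv_quot)
  have rb: "rderiv b = to_fract (pderiv r * s - r * pderiv s) / to_fract (s*s)" using b s by (simp add: rderiv_quot)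
  have g: "to_fract (pderiv (p*s + r*q) * (q*s) - (p*s + r*q) * pderiv (q*s)) / to_fract (q*s*(q*s))
     = to_fract (pderiv p * q - p * pderiv q) / to_fract (q*q) + to_fract (pderiv r * s - r * pderiv s) / to_fract (s*s)"
    using q s by (simp add: pderiv_mult pderiv_add field_simps)
  show ?thesis unfolding rab ra rb by (rule g)
qed

lemma rderiv_mult [simp]: "rderiv (a * b) = rderiv a * b + a * rderiv b"
proof -
  obtain p q where q: "q \<noteq> 0" and a: "a = to_fract p / to_fract q" by (rule fract_rep)
  obtain r s where s: "s \<noteq> 0" and b: "b = to_fract r / to_fract s" by (rule fract_rep)
  have "a * b = to_fract (p*r) / to_fract (q*s)" using q s a b by (simp add: field_simps)
  hence rab: "rderiv (a*b) = to_fract (pderiv (p*r) * (q*s) - (p*r) * pderiv (q*s)) / to_fract (q*s*(q*s))"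
    by (simp only:) (rule rderiv_quot, simp add: q s)
  have ra: "rderiv a = to_fract (pderiv p * q - p * pderiv q) / to_fract (q*q)" using a q by (simp add: rderiv_quot)
  have rb: "rderiv b = to_fract (pderiv r * s - r * pderiv s) / to_fract (s*s)" using b s by (simp add: rderiv_quot)
  have g: "to_fract (pderiv (p*r) * (q*s) - (p*r) * pderiv (q*s)) / to_fract (q*s*(q*s))
     = to_fract (pderiv p * q - p * pderiv q) / to_fract (q*q) * (to_fract r / to_fract s)
       + to_fract p / to_fract q * (to_fract (pderiv r * s - r * pderiv s) / to_fract (s*s))"
    using q s by (simp add: pderiv_mult field_simps)
  show ?thesis unfolding rab ra rb using a b g by simp
qed

lemma rderiv_uminus [simp]: "rderiv (- a) = - rderiv a"
proof -
  have "rderiv (a + - a) = 0" by simp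
  hence "rderiv a + rderiv (- a) = 0" by (simp only: rderiv_add)
  thus ?thesis by (simp add: eq_neg_iff_add_eq_0 add.commute)
qed

lemma rderiv_sum: "rderiv (sum g S) = (\<Sum>i\<in>S. rderiv (g i))"
  by (induction S rule: infinite_finite_induct) auto

definition app :: "lodo \<Rightarrow> ratfun \<Rightarrow> ratfun" where
  "app A f = (\<Sum>i\<le>degree A. coeff A i * (rderiv ^^ i) f)"

lemma app_bound: "degree A \<le> m \<Longrightarrow> app A f = (\<Sum>i\<le>m. coeff A i * (rderiv ^^ i) f)"
  unfolding app_def
  by (rule sum.mono_neutral_left) (auto simp: coeff_eq_0)

lemma app_add: "app (A + B) f = app A f + app B f"
proof -
  let ?m = "max (degree A) (degree B)"
  have "degree (A+B) \<le> ?m" by (rule degree_add_le) auto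
  thus ?thesis using app_bound[of A ?m] app_bound[of B ?m] app_bound[of "A+B" ?m]
    by (simp add: sum.distrib algebra_simps)
qed

lemma app_zero [simp]: "app 0 f = 0" by (simp add: app_def)

lemma app_sum: "app (sum g S) f = (\<Sum>i\<in>S. app (g i) f)"
  by (induction S rule: infinite_finite_induct) (auto simp: app_add)

lemma app_smult: "app (smult c A) f = c * app A f"
  using app_bound[of "smult c A" "degree A"] by (simp add: app_def sum_distrib_left mult.assoc)

lemma funpow_rderiv_0 [simp]: "(rderiv ^^ i) 0 = 0"
  by (induction i) auto

lemma app_f0 [simp]: "app A 0 = 0" by (simp add: app_def)

lemma app_pCons0: "app (pCons 0 B) f = app B (rderiv f)"
proof -
  have "app (pCons 0 B) f = (\<Sum>i\<le>Suc (degree B). coeff (pCons 0 B) i * (rderiv ^^ i) f)"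
    by (rule app_bound) (simp add: degree_pCons_le)
  also have "\<dots> = (\<Sum>i\<le>degree B. coeff B i * (rderiv ^^ i) (rderiv f))"
    by (subst sum.atMost_Suc_shift) (simp, rule sum.cong, simp, metis funpow_swap1)
  finally show ?thesis by (simp add: app_def)
qed

lemma app_map: "app (map_poly rderiv B) f = (\<Sum>i\<le>degree B. rderiv (coeff B i) * (rderiv ^^ i) f)"
  by (subst app_bound[of _ "degree B"]) (auto simp: map_poly_degree_leq coeff_map_poly)

lemma app_Dmul: "app (Dmul B) f = rderiv (app B f)"
  unfolding Dmul_def app_add app_pCons0 app_map
  by (simp add: app_def rderiv_sum sum.distrib funpow_swap1)

lemma app_Dmul_pow: "app ((Dmul ^^ i) B) f = (rderiv ^^ i) (app B f)"
  by (induction i) (auto simp: app_Dmul)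

lemma app_mult: "app (lodo_mult A B) f = app A (app B f)"
  unfolding lodo_mult_def app_sum app_smult app_Dmul_pow by (simp add: app_def)

lemma app_one: "app 1 f = f" by (simp add: app_def)

lemma Dmul_zero [simp]: "Dmul 0 = 0" by (simp add: Dmul_def)

lemma Dmul_pow_zero [simp]: "(Dmul ^^ i) 0 = 0" by (induction i) auto

lemma lodo_mult_0_right [simp]: "lodo_mult B 0 = 0" by (simp add: lodo_mult_def)

lemma lodo_mult_0_left [simp]: "lodo_mult 0 H = 0" by (simp add: lodo_mult_def)

lemma Dmul_deg:
  assumes "H \<noteq> 0"
  shows "degree (Dmul H) = Suc (degree H) \<and> coeff (Dmul H) (Suc (degree H)) = lead_coeff H"
proof -
  have c: "coeff (Dmul H) (Suc (degree H)) = lead_coeff H"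
    by (simp add: Dmul_def coeff_map_poly coeff_eq_0)
  have "degree (Dmul H) \<le> Suc (degree H)" unfolding Dmul_def
    by (rule degree_add_le) (auto intro: le_SucI simp: degree_pCons_le map_poly_degree_leq)
  moreover have "Suc (degree H) \<le> degree (Dmul H)"
    by (rule le_degree) (simp add: c assms)
  ultimately show ?thesis using c by simp
qed

lemma Dmul_pow_deg:
  assumes "H \<noteq> 0"
  shows "degree ((Dmul ^^ i) H) = degree H + i \<and> coeff ((Dmul ^^ i) H) (degree H + i) = lead_coeff H"
proof (induction i)
  case 0 then show ?case by simp
next
  case (Suc i)
  have nz: "(Dmul ^^ i) H \<noteq> 0" using Suc assms by (metis leading_coeff_0_iff)
  show ?case using Dmul_deg[OF nz] Suc by simp
qed

lemma lodo_mult_deg: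
  assumes B: "B \<noteq> 0" and H: "H \<noteq> 0"
  shows "degree (lodo_mult B H) = degree B + degree H"
proof -
  let ?n = "degree B + degree H"
  have le: "degree (lodo_mult B H) \<le> ?n" unfolding lodo_mult_def
  proof (rule degree_sum_le)
    fix i assume "i \<in> {..degree B}"
    thus "degree (smult (coeff B i) ((Dmul ^^ i) H)) \<le> ?n"
      using Dmul_pow_deg[OF H, of i] degree_smult_le[of "coeff B i" "(Dmul ^^ i) H"] by simp
  qed simp
  have "coeff (lodo_mult B H) ?n = (\<Sum>i\<le>degree B. coeff B i * coeff ((Dmul ^^ i) H) ?n)"
    by (simp add: lodo_mult_def coeff_sum)
  also have "\<dots> = (\<Sum>i\<le>degree B. if i = degree B then lead_coeff B * lead_coeff H else 0)"
  proof (rule sum.cong)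
    fix i assume i: "i \<in> {..degree B}"
    show "coeff B i * coeff ((Dmul ^^ i) H) ?n = (if i = degree B then lead_coeff B * lead_coeff H else 0)"
    proof (cases "i = degree B")
      case True then show ?thesis using Dmul_pow_deg[OF H, of i] by (simp add: add.commute)
    next
      case False
      hence "i < degree B" using i by simp
      hence "coeff ((Dmul ^^ i) H) ?n = 0" using Dmul_pow_deg[OF H, of i] by (intro coeff_eq_0) simp
      thus ?thesis using False by simp
    qed
  qed simp
  also have "\<dots> = lead_coeff B * lead_coeff H" by simp
  finally have "coeff (lodo_mult B H) ?n \<noteq> 0" using B H by simp
  hence "?n \<le> degree (lodo_mult B H)" by (rule le_degree)
  with le show ?thesis by simp
qed

lemma lodo_mult_deg0: "degree B = 0 \<Longrightarrow> lodo_mult B H = smult (coeff B 0) H"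
  by (simp add: lodo_mult_def)

lemma lodo_mult_deg1: "degree B = 1 \<Longrightarrow> lodo_mult B H = smult (coeff B 0) H + smult (coeff B 1) (Dmul H)"
  by (simp add: lodo_mult_def)

lemma Lden_nz [simp]: "Lden y \<noteq> 0"
  by (auto simp: Lden_def)

definition a0 :: "real \<Rightarrow> ratfun" where "a0 y = to_fract [:2 * (y + 1)^2:] / to_fract (Lden y * Lden y)"
definition a1 :: "real \<Rightarrow> ratfun" where "a1 y = to_fract [:- 2 * (y + 1):] / to_fract (Lden y)"

lemma Lop_alt: "Lop y = [: a0 y, a1 y, 1 :]"
  by (simp add: Lop_def a0_def a1_def Fract_conv_to_fract)

lemma Lop_coeffs: "coeff (Lop y) 0 = a0 y" "coeff (Lop y) 1 = a1 y" "coeff (Lop y) 2 = 1"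
  "degree (Lop y) = 2" "Lop y \<noteq> 0"
  by (auto simp: Lop_alt numeral_2_eq_2)

lemma polyid: "pderiv (pderiv (Lden y * Lden w)) * Lden y * Lden y + [:- 2*(y+1):] * pderiv (Lden y * Lden w) * Lden y + [:2*(y+1)^2:] * (Lden y * Lden w) = 0"
  apply (rule poly_eq_poly_eq_iff[THEN iffD1])
  apply (rule ext)
  apply (simp add: Lden_def pderiv_mult pderiv_pCons)
  apply (simp add: algebra_simps power2_eq_square)
  done

lemma app_Lop_expand: "app (Lop y) f = a0 y * f + a1 y * rderiv f + rderiv (rderiv f)"
  by (subst app_bound[of _ 2]) (auto simp: Lop_coeffs numeral_2_eq_2 Lop_alt)

lemma field_aux: "(l::ratfun) \<noteq> 0 \<Longrightarrow> A/(l*l)*Z + B/l*Z1 + Z2 = (Z2*l*l + B*Z1*l + A*Z)/(l*l)"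
  by (simp add: field_simps)

lemma app_Lop: "app (Lop y) (to_fract (Lden y * Lden w)) = 0"
proof -
  let ?P = "Lden y * Lden w"
  let ?l = "to_fract (Lden y)"
  have l: "?l \<noteq> 0" by simp
  have "app (Lop y) (to_fract ?P) = to_fract [:2 * (y + 1)^2:] / (?l * ?l) * to_fract ?P
     + to_fract [:- 2 * (y + 1):] / ?l * to_fract (pderiv ?P) + to_fract (pderiv (pderiv ?P))"
    unfolding app_Lop_expand a0_def a1_def rderiv_to_fract to_fract_mult[of "Lden y" "Lden y"] ..
  also have "\<dots> = to_fract (pderiv (pderiv ?P) * Lden y * Lden y + [:- 2*(y+1):] * pderiv ?P * Lden y + [:2*(y+1)^2:] * ?P) / (?l * ?l)"
    by (subst field_aux[OF l]) (simp only: to_fract_add to_fract_mult)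
  also have "\<dots> = 0" by (simp only: polyid to_fract_0 div_0)
  finally show ?thesis .
qed

lemma Lop_inj: assumes "Lop y1 = Lop y2" shows "y1 = y2"
proof -
  have "a1 y1 = a1 y2" using arg_cong[OF assms, of "\<lambda>p. coeff p 1"] by (simp add: Lop_alt)
  hence "to_fract [:- 2 * (y1 + 1):] * to_fract (Lden y2) = to_fract [:- 2 * (y2 + 1):] * to_fract (Lden y1)"
    by (simp add: a1_def field_simps)
  hence "[:- 2 * (y1 + 1):] * Lden y2 = [:- 2 * (y2 + 1):] * Lden y1"
    by (simp only: to_fract_mult[symmetric] to_fract_eq_iff)
  hence "coeff ([:- 2 * (y1 + 1):] * Lden y2) 0 = coeff ([:- 2 * (y2 + 1):] * Lden y1) 0" by simp
  thus ?thesis by (simp add: Lden_def algebra_simps)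
qed

lemma two_div:
  assumes ne: "y1 \<noteq> y2" and cd: "common_right_divisor H [Lop y1, Lop y2]"
  shows "degree H \<le> 1"
proof (rule ccontr)
  assume "\<not> degree H \<le> 1"
  hence dH: "degree H \<ge> 2" by simp
  have H: "H \<noteq> 0" using cd by (simp add: common_right_divisor_def)
  obtain B1 where B1: "Lop y1 = lodo_mult B1 H" using cd by (auto simp: common_right_divisor_def)
  obtain B2 where B2: "Lop y2 = lodo_mult B2 H" using cd by (auto simp: common_right_divisor_def)
  have nz1: "B1 \<noteq> 0" using B1 Lop_coeffs(5)[of y1] by auto
  have nz2: "B2 \<noteq> 0" using B2 Lop_coeffs(5)[of y2] by auto
  have d1: "degree B1 = 0" using lodo_mult_deg[OF nz1 H] B1 Lop_coeffs(4)[of y1] dH by simp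
  have d2: "degree B2 = 0" using lodo_mult_deg[OF nz2 H] B2 Lop_coeffs(4)[of y2] dH by simp
  have e1: "Lop y1 = smult (coeff B1 0) H" using B1 d1 by (simp add: lodo_mult_deg0)
  have e2: "Lop y2 = smult (coeff B2 0) H" using B2 d2 by (simp add: lodo_mult_deg0)
  have c1: "1 = coeff B1 0 * coeff H 2" using arg_cong[OF e1, of "\<lambda>p. coeff p 2"] by (simp add: Lop_coeffs)
  have c2: "1 = coeff B2 0 * coeff H 2" using arg_cong[OF e2, of "\<lambda>p. coeff p 2"] by (simp add: Lop_coeffs)
  have "coeff H 2 \<noteq> 0" using c1 by auto
  hence "coeff B1 0 = coeff B2 0" using c1 c2 by (metis mult_right_cancel)
  hence "Lop y1 = Lop y2" using e1 e2 by simp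
  thus False using ne Lop_inj by blast
qed

lemma pair_factor:
  fixes y w :: real
  defines "P \<equiv> Lden y * Lden w"
  defines "r \<equiv> to_fract (pderiv P) / to_fract P"
  shows "lodo_mult [:a1 y + r, 1:] [:-r, 1:] = Lop y"
proof -
  let ?z = "to_fract P" and ?z1 = "to_fract (pderiv P)" and ?z2 = "to_fract (pderiv (pderiv P))"
  have Lden_nz_P: "P \<noteq> 0" by (simp add: P_def)
  have zn: "?z \<noteq> 0" by (simp add: P_def)
  have R: "a0 y * ?z + a1 y * ?z1 + ?z2 = 0"
    using app_Lop[of y w] unfolding app_Lop_expand rderiv_to_fract P_def .
  have a0e: "a0 y = - (a1 y * ?z1 + ?z2) / ?z" using R zn by (simp add: field_simps)
  have rd: "rderiv r = (?z2 * ?z - ?z1 * ?z1) / (?z * ?z)"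
    unfolding r_def rderiv_quot[OF Lden_nz_P] by simp
  have key: "a0 y = - ((a1 y + r) * r) - rderiv r"
    unfolding rd unfolding a0e r_def using zn by (simp add: field_simps)
  show ?thesis
    by (simp add: lodo_mult_deg1 Dmul_def Lop_alt key map_poly_pCons)
qed

lemma riccati_eq:
  assumes L: "Lop y = lodo_mult B H" and dH: "degree H = 1"
  shows "a0 y * coeff H 1 ^ 2 = a1 y * coeff H 0 * coeff H 1 - coeff H 0 ^ 2
     - coeff H 0 * rderiv (coeff H 1) + rderiv (coeff H 0) * coeff H 1"
proof -
  have H: "H \<noteq> 0" using dH by auto
  have B: "B \<noteq> 0" using L Lop_coeffs(5)[of y] by auto
  have dB: "degree B = 1" using lodo_mult_deg[OF B H] L Lop_coeffs(4)[of y] dH by simp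
  have L': "Lop y = smult (coeff B 0) H + smult (coeff B 1) (Dmul H)" using L dB by (simp add: lodo_mult_deg1)
  have H2: "coeff H 2 = 0" using dH by (simp add: coeff_eq_0)
  have e2: "1 = coeff B 1 * coeff H 1"
    using arg_cong[OF L', of "\<lambda>p. coeff p 2"] H2 by (simp add: Lop_alt Dmul_def coeff_map_poly numeral_2_eq_2)
  have e1: "a1 y = coeff B 0 * coeff H 1 + coeff B 1 * (coeff H 0 + rderiv (coeff H 1))"
    using arg_cong[OF L', of "\<lambda>p. coeff p 1"] by (simp add: Lop_alt Dmul_def coeff_map_poly coeff_pCons)
  have e0: "a0 y = coeff B 0 * coeff H 0 + coeff B 1 * rderiv (coeff H 0)"
    using arg_cong[OF L', of "\<lambda>p. coeff p 0"] by (simp add: Lop_alt Dmul_def coeff_map_poly)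
  show ?thesis using e0 e1 e2 by algebra
qed

lemma three_div:
  assumes cd: "common_right_divisor H [Lop (-1), Lop 0, Lop 1]"
  shows "degree H = 0"
proof (rule ccontr)
  assume "degree H \<noteq> 0"
  moreover have "degree H \<le> 1" using two_div[of "-1" 0 H] cd by (simp add: common_right_divisor_def)
  ultimately have dH: "degree H = 1" by simp
  obtain B1 where B1: "Lop (-1) = lodo_mult B1 H" using cd by (auto simp: common_right_divisor_def)
  obtain B2 where B2: "Lop 0 = lodo_mult B2 H" using cd by (auto simp: common_right_divisor_def)
  obtain B3 where B3: "Lop 1 = lodo_mult B3 H" using cd by (auto simp: common_right_divisor_def)
  define u where "u = coeff H 0"
  define v where "v = coeff H 1"
  define K where "K = rderiv u * v - u * u - u * rderiv v"
  have vn: "v \<noteq> 0" using dH unfolding v_def by (metis leading_coeff_0_iff one_neq_zero degree_0)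
  define X where "X = to_fract [:0, 1::real:]"
  define t where "t = to_fract [:2::real:]"
  have Xn: "X \<noteq> 0" by (simp add: X_def)
  have tn: "t \<noteq> 0" by (simp add: t_def)
  have Ln: "1 + t * X \<noteq> 0"
  proof -
    have pe: "[:1, 2::real:] = 1 + [:2:] * [:0, 1:]" by (simp add: one_pCons)
    have "1 + t * X = to_fract [:1, 2:]" unfolding t_def X_def pe by (simp only: to_fract_add to_fract_mult to_fract_1)
    thus ?thesis by simp
  qed
  have a0m: "a0 (-1) = 0" and a1m: "a1 (-1) = 0" by (simp_all add: a0_def a1_def)
  have p1: "[:2*(0+1)^2::real:] = [:2:]" by simp
  have p2: "Lden 0 = [:0, 1:]" by (simp add: Lden_def)
  have p3: "[:- 2*(0+1)::real:] = - [:2:]" by simp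
  have p4: "[:2*(1+1)^2::real:] = [:2:] * [:2:] * [:2:]" by simp
  have p5: "Lden 1 = 1 + [:2:] * [:0, 1:]" by (simp add: Lden_def one_pCons)
  have p6: "[:- 2*(1+1)::real:] = - ([:2:] * [:2:])" by simp
  have a00: "a0 0 = t / (X * X)" unfolding a0_def p1 p2 t_def X_def by (simp only: to_fract_mult)
  have a10: "a1 0 = - t / X" unfolding a1_def p3 p2 t_def X_def by (simp only: to_fract_uminus)
  have a01: "a0 1 = t^3 / ((1 + t * X) * (1 + t * X))" unfolding a0_def p4 p5 t_def X_def
    by (simp only: to_fract_mult to_fract_add to_fract_1 power3_eq_cube)
  have a11: "a1 1 = - (t^2) / (1 + t * X)" unfolding a1_def p6 p5 t_def X_def
    by (simp only: to_fract_mult to_fract_add to_fract_1 to_fract_uminus power2_eq_square)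
  have E1: "0 = K" using riccati_eq[OF B1 dH] a0m a1m unfolding K_def u_def[symmetric] v_def[symmetric] by (simp add: power2_eq_square algebra_simps)
  have E2: "t / (X * X) * v^2 = - t / X * u * v + K" using riccati_eq[OF B2 dH] a00 a10 unfolding K_def u_def[symmetric] v_def[symmetric] by (simp add: power2_eq_square algebra_simps)
  have E3: "t^3 / ((1 + t * X) * (1 + t * X)) * v^2 = - (t^2) / (1 + t * X) * u * v + K"
    using riccati_eq[OF B3 dH] a01 a11 unfolding K_def u_def[symmetric] v_def[symmetric] by (simp add: power2_eq_square algebra_simps)
  have f2: "t * (v * v) = - (X * (t * (u * v)))" using E2 E1 Xn tn vn by (simp add: field_simps power2_eq_square)
  have "(t * v) * (v + X * u) = 0" using f2 by algebra
  hence g2: "v + X * u = 0" using tn vn by simp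
  have gen: "\<And>L. L \<noteq> 0 \<Longrightarrow> t^3/(L*L)*v^2 = -(t^2)/L*u*v \<Longrightarrow> t*(t*(t*(v*v))) = -(t*(t*(u*v))*L)"
    by (simp add: field_simps power2_eq_square power3_eq_cube)
  have f3: "t * (t * (t * (v * v))) = - (t * (t * (u * v)) * (1 + t * X))" using E3 E1 gen[OF Ln] by simp
  have "(t * t * v) * (t * v + (1 + t * X) * u) = 0" using f3 by algebra
  hence g3: "t * v + (1 + t * X) * u = 0" using tn vn by simp
  have "u = 0" using g2 g3 by algebra
  thus False using g2 vn by simp
qed

lemma Dmul_pow_one: "(Dmul ^^ i) 1 = monom 1 i"
proof (induction i)
  case 0 then show ?case by (simp add: monom_0 one_pCons)
next
  case (Suc i) then show ?case by (simp add: Dmul_def map_poly_monom monom_Suc)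
qed

lemma lodo_mult_one_right: "lodo_mult A 1 = A"
  unfolding lodo_mult_def Dmul_pow_one by (simp add: smult_monom poly_as_sum_of_monoms)

theorem mainTheorem3:
  shows "(\<forall>y1 y2. y1 \<noteq> y2 \<longrightarrow>
            (\<exists>G. is_rgcd G [Lop y1, Lop y2] \<and> lodo_ord G = 1))
       \<and> (\<exists>y1 y2 y3. \<exists>G. is_rgcd G [Lop y1, Lop y2, Lop y3] \<and> lodo_ord G = 0)
       \<and> \<not> (\<exists>(M :: real \<Rightarrow> lodo) (R :: lodo).
              \<forall>y. Lop y = lodo_mult (M y) R \<and> lodo_ord (M y) < lodo_ord (Lop y))
       \<and> \<not> (\<exists>y1 y2 (P1 :: lodo) (P2 :: lodo).
              lodo_mult P1 (Lop y1) + lodo_mult P2 (Lop y2) = 1)"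
proof (intro conjI allI impI)
  fix y1 y2 :: real assume ne: "y1 \<noteq> y2"
  define r where "r = to_fract (pderiv (Lden y1 * Lden y2)) / to_fract (Lden y1 * Lden y2)"
  have r2: "r = to_fract (pderiv (Lden y2 * Lden y1)) / to_fract (Lden y2 * Lden y1)"
    unfolding r_def by (simp only: mult.commute)
  have f1: "Lop y1 = lodo_mult [:a1 y1 + r, 1:] [:-r, 1:]" using pair_factor[of y1 y2] unfolding r_def by simp
  have f2: "Lop y2 = lodo_mult [:a1 y2 + r, 1:] [:-r, 1:]" using pair_factor[of y2 y1] unfolding r2 by simp
  have cd: "common_right_divisor [:-r, 1:] [Lop y1, Lop y2]"
    unfolding common_right_divisor_def using f1 f2 by auto
  have "is_rgcd [:-r, 1:] [Lop y1, Lop y2]"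
    unfolding is_rgcd_def lodo_ord_def using cd two_div[OF ne] by auto
  moreover have "lodo_ord [:-r, 1:] = 1" by (simp add: lodo_ord_def)
  ultimately show "\<exists>G. is_rgcd G [Lop y1, Lop y2] \<and> lodo_ord G = 1" by blast
next
  have cd: "common_right_divisor 1 [Lop (-1), Lop 0, Lop 1]"
    unfolding common_right_divisor_def using lodo_mult_one_right by auto
  have "is_rgcd 1 [Lop (-1), Lop 0, Lop 1]"
    unfolding is_rgcd_def lodo_ord_def using cd three_div by auto
  thus "\<exists>y1 y2 y3. \<exists>G. is_rgcd G [Lop y1, Lop y2, Lop y3] \<and> lodo_ord G = 0"
    by (intro exI[of _ "-1"] exI[of _ 0] exI[of _ 1] exI[of _ 1]) (simp add: lodo_ord_def)
next
  show "\<not> (\<exists>(M :: real \<Rightarrow> lodo) (R :: lodo).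
              \<forall>y. Lop y = lodo_mult (M y) R \<and> lodo_ord (M y) < lodo_ord (Lop y))"
  proof
    assume "\<exists>(M :: real \<Rightarrow> lodo) (R :: lodo).
              \<forall>y. Lop y = lodo_mult (M y) R \<and> lodo_ord (M y) < lodo_ord (Lop y)"
    then obtain M R where MR: "\<And>y. Lop y = lodo_mult (M y) R \<and> lodo_ord (M y) < lodo_ord (Lop y)" by blast
    have Rn: "R \<noteq> 0" using MR[of 0] Lop_coeffs(5)[of 0] by auto
    have "common_right_divisor R [Lop (-1), Lop 0, Lop 1]"
      unfolding common_right_divisor_def using MR Rn by auto
    hence dR: "degree R = 0" by (rule three_div)
    have Mn: "M 0 \<noteq> 0" using MR[of 0] Lop_coeffs(5)[of 0] by auto
    have "degree (Lop 0) = degree (M 0)" using lodo_mult_deg[OF Mn Rn] MR[of 0] dR by simp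
    moreover have "degree (M 0) < degree (Lop 0)" using MR[of 0] unfolding lodo_ord_def by blast
    ultimately show False by simp
  qed
next
  show "\<not> (\<exists>y1 y2 (P1 :: lodo) (P2 :: lodo).
              lodo_mult P1 (Lop y1) + lodo_mult P2 (Lop y2) = 1)"
  proof
    assume "\<exists>y1 y2 (P1 :: lodo) (P2 :: lodo). lodo_mult P1 (Lop y1) + lodo_mult P2 (Lop y2) = 1"
    then obtain y1 y2 P1 P2 where e: "lodo_mult P1 (Lop y1) + lodo_mult P2 (Lop y2) = (1::lodo)" by blast
    define z where "z = to_fract (Lden y1 * Lden y2)"
    have z1: "app (Lop y1) z = 0" unfolding z_def by (rule app_Lop)
    have z2: "app (Lop y2) z = 0" unfolding z_def using app_Lop[of y2 y1] by (simp only: mult.commute)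
    have "app 1 z = 0" unfolding e[symmetric] app_add app_mult z1 z2 by simp
    moreover have "z \<noteq> 0" unfolding z_def by simp
    ultimately show False by (simp add: app_one)
  qed
qed

end
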